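(* Let $A$ be a profinite algebra and let $C$ be any coalgebra with $A=C^*$. If $H$ is a simple left $A$-module which embeds in $A$ (as a left $A$-module), then $H$ is a rational $C^*$-module.
   Context: A profinite algebra is an algebra over a field which is an inverse limit of finite dimensional algebras, equivalently the dual algebra $C^*$ of a coalgebra $C$. A left $C^*$-module $M$ is rational if it arises from a right $C$-comodule structure via $f\rightharpoonup m=\sum m_0f(m_1)$, i.e. for every $m\in M$ there are $m_1,\dots,m_n\in M$ and $c_1,\dots,c_n\in C$ with $f\rightharpoonup m=\sum_i f(c_i)m_i$ for all $f\in C^*$. *)

theory Defs
  imports Complex_Main
begin

text \<open>The underlying k-vector space is the whole type 'c
  with scalar multiplication sc. The comultiplication sends c to a finite sum
  of simple tensors, encoded as a list of pairs (a,b) meaning the sum of a \<otimes> b.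
  Since simple tensors of linear functionals separate points of tensor products
  of vector spaces, the coalgebra axioms are stated by testing against linear
  functionals.\<close>

definition dual_space :: "('k::field \<Rightarrow> 'c::ab_group_add \<Rightarrow> 'c) \<Rightarrow> ('c \<Rightarrow> 'k) set" where
  "dual_space sc = {f. Vector_Spaces.linear sc (*) f}"

definition conv :: "('c \<Rightarrow> ('c \<times> 'c) list) \<Rightarrow> ('c \<Rightarrow> 'k::field) \<Rightarrow> ('c \<Rightarrow> 'k) \<Rightarrow> ('c \<Rightarrow> 'k)" where
  "conv \<Delta> f g = (\<lambda>c. \<Sum>(a,b)\<leftarrow>\<Delta> c. f a * g b)"

definition coalgebra :: "('k::field \<Rightarrow> 'c::ab_group_add \<Rightarrow> 'c) \<Rightarrow> ('c \<Rightarrow> ('c \<times> 'c) list) \<Rightarrow> ('c \<Rightarrow> 'k) \<Rightarrow> bool" where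
  "coalgebra sc \<Delta> \<epsilon> \<longleftrightarrow>
     vector_space sc \<and>
     \<epsilon> \<in> dual_space sc \<and>
     (\<forall>f\<in>dual_space sc. \<forall>g\<in>dual_space sc. conv \<Delta> f g \<in> dual_space sc) \<and>
     (\<forall>f\<in>dual_space sc. \<forall>g\<in>dual_space sc. \<forall>h\<in>dual_space sc. \<forall>c.
        (\<Sum>(a,b)\<leftarrow>\<Delta> c. (\<Sum>(a1,a2)\<leftarrow>\<Delta> a. f a1 * g a2) * h b) =
        (\<Sum>(a,b)\<leftarrow>\<Delta> c. f a * (\<Sum>(b1,b2)\<leftarrow>\<Delta> b. g b1 * h b2))) \<and>
     (\<forall>c. (\<Sum>(a,b)\<leftarrow>\<Delta> c. sc (\<epsilon> a) b) = c) \<and>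
     (\<forall>c. (\<Sum>(a,b)\<leftarrow>\<Delta> c. sc (\<epsilon> b) a) = c)"

definition dual_module :: "('k::field \<Rightarrow> 'c::ab_group_add \<Rightarrow> 'c) \<Rightarrow> ('c \<Rightarrow> ('c \<times> 'c) list) \<Rightarrow> ('c \<Rightarrow> 'k)
    \<Rightarrow> ('k \<Rightarrow> 'h::ab_group_add \<Rightarrow> 'h) \<Rightarrow> (('c \<Rightarrow> 'k) \<Rightarrow> 'h \<Rightarrow> 'h) \<Rightarrow> bool" where
  "dual_module sc \<Delta> \<epsilon> scH act \<longleftrightarrow>
     vector_space scH \<and>
     (\<forall>f\<in>dual_space sc. \<forall>x y. act f (x + y) = act f x + act f y) \<and>
     (\<forall>f\<in>dual_space sc. \<forall>g\<in>dual_space sc. \<forall>x. act (\<lambda>c. f c + g c) x = act f x + act g x) \<and>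
     (\<forall>f\<in>dual_space sc. \<forall>g\<in>dual_space sc. \<forall>x. act (conv \<Delta> f g) x = act f (act g x)) \<and>
     (\<forall>x. act \<epsilon> x = x) \<and>
     (\<forall>f\<in>dual_space sc. \<forall>r x. act (\<lambda>c. r * f c) x = scH r (act f x) \<and> act f (scH r x) = scH r (act f x))"

definition dual_submodule :: "('k::field \<Rightarrow> 'c::ab_group_add \<Rightarrow> 'c) \<Rightarrow> (('c \<Rightarrow> 'k) \<Rightarrow> 'h::ab_group_add \<Rightarrow> 'h) \<Rightarrow> 'h set \<Rightarrow> bool" where
  "dual_submodule sc act N \<longleftrightarrow>
     0 \<in> N \<and> (\<forall>x\<in>N. \<forall>y\<in>N. x + y \<in> N) \<and> (\<forall>f\<in>dual_space sc. \<forall>x\<in>N. act f x \<in> N)"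

definition simple_dual_module :: "('k::field \<Rightarrow> 'c::ab_group_add \<Rightarrow> 'c) \<Rightarrow> ('c \<Rightarrow> ('c \<times> 'c) list) \<Rightarrow> ('c \<Rightarrow> 'k)
    \<Rightarrow> ('k \<Rightarrow> 'h::ab_group_add \<Rightarrow> 'h) \<Rightarrow> (('c \<Rightarrow> 'k) \<Rightarrow> 'h \<Rightarrow> 'h) \<Rightarrow> bool" where
  "simple_dual_module sc \<Delta> \<epsilon> scH act \<longleftrightarrow>
     dual_module sc \<Delta> \<epsilon> scH act \<and> (\<exists>x::'h. x \<noteq> 0) \<and>
     (\<forall>N. dual_submodule sc act N \<longrightarrow> N = {0} \<or> N = UNIV)"

definition embeds_in_dual :: "('k::field \<Rightarrow> 'c::ab_group_add \<Rightarrow> 'c) \<Rightarrow> ('c \<Rightarrow> ('c \<times> 'c) list)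
    \<Rightarrow> (('c \<Rightarrow> 'k) \<Rightarrow> 'h::ab_group_add \<Rightarrow> 'h) \<Rightarrow> bool" where
  "embeds_in_dual sc \<Delta> act \<longleftrightarrow>
     (\<exists>\<phi> :: 'h \<Rightarrow> ('c \<Rightarrow> 'k). inj \<phi> \<and> (\<forall>x. \<phi> x \<in> dual_space sc) \<and>
        (\<forall>x y. \<phi> (x + y) = (\<lambda>c. \<phi> x c + \<phi> y c)) \<and>
        (\<forall>f\<in>dual_space sc. \<forall>x. \<phi> (act f x) = conv \<Delta> f (\<phi> x)))"

definition rational_dual_module :: "('k::field \<Rightarrow> 'c::ab_group_add \<Rightarrow> 'c)
    \<Rightarrow> ('k \<Rightarrow> 'h::ab_group_add \<Rightarrow> 'h) \<Rightarrow> (('c \<Rightarrow> 'k) \<Rightarrow> 'h \<Rightarrow> 'h) \<Rightarrow> bool" where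
  "rational_dual_module sc scH act \<longleftrightarrow>
     (\<forall>m. \<exists>ps :: ('h \<times> 'c) list. \<forall>f\<in>dual_space sc. act f m = (\<Sum>(mi,ci)\<leftarrow>ps. scH (f ci) mi))"

end

theory Submission
  imports Defs
begin

lemma vs_self: "vector_space ((*) :: 'k::field \<Rightarrow> 'k \<Rightarrow> 'k)"
  by unfold_locales (auto simp: algebra_simps)

lemma ds_iff:
  assumes "vector_space sc"
  shows "f \<in> dual_space sc \<longleftrightarrow> (\<forall>x y. f (x+y) = f x + f y) \<and> (\<forall>r x. f (sc r x) = r * f x)"
  using assms vs_self unfolding dual_space_def Vector_Spaces.linear_iff by auto

lemma sum_list_zero': "(\<forall>x\<in>set xs. F x = 0) \<Longrightarrow> sum_list (map F xs) = (0::'a::monoid_add)"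
  by (induct xs) auto

lemma ds_zero: "vector_space sc \<Longrightarrow> (\<lambda>q. 0) \<in> dual_space sc"
  by (simp add: ds_iff)

lemma ds_add: "vector_space sc \<Longrightarrow> f \<in> dual_space sc \<Longrightarrow> g \<in> dual_space sc \<Longrightarrow> (\<lambda>q. f q + g q) \<in> dual_space sc"
  by (simp add: ds_iff algebra_simps)

lemma ds_scale: "vector_space sc \<Longrightarrow> f \<in> dual_space sc \<Longrightarrow> (\<lambda>q. r * f q) \<in> dual_space sc"
  by (simp add: ds_iff algebra_simps)

lemma ds_diff: "vector_space sc \<Longrightarrow> f \<in> dual_space sc \<Longrightarrow> g \<in> dual_space sc \<Longrightarrow> (\<lambda>q. f q - g q) \<in> dual_space sc"
  by (simp add: ds_iff algebra_simps)

lemma ds_sum: "vector_space sc \<Longrightarrow> (\<forall>y\<in>set ys. F y \<in> dual_space sc) \<Longrightarrow> (\<lambda>q. sum_list (map (\<lambda>y. F y q) ys)) \<in> dual_space sc"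
proof (induct ys)
  case Nil then show ?case by (simp add: ds_zero)
next
  case (Cons y ys)
  then show ?case using ds_add[of sc "F y" "\<lambda>q. sum_list (map (\<lambda>y. F y q) ys)"] by simp
qed

lemma ds_sum_list: "vector_space sc \<Longrightarrow> h \<in> dual_space sc \<Longrightarrow> h (sum_list (map G xs)) = sum_list (map (\<lambda>x. h (G x)) xs)"
proof (induct xs)
  case Nil
  have "\<forall>x y. h (x + y) = h x + h y" using Nil by (simp add: ds_iff)
  then have "h (0 + 0) = h 0 + h 0" by blast
  then have "h 0 = h 0 + h 0" by (metis add.right_neutral)
  then show ?case by (metis add_cancel_right_right list.map(1) sum_list.Nil)
next
  case (Cons a xs) then show ?case by (simp add: ds_iff)
qed

lemma aux_sum: "(\<Sum>(e,d)\<leftarrow>ps. f d * (e q - e p * w)) = (\<Sum>(e,d)\<leftarrow>ps. f d * e q) - (\<Sum>(e,d)\<leftarrow>ps. f d * e p) * (w::'k::field)"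
  by (induct ps) (auto simp: algebra_simps)

lemma interp:
  assumes vs: "vector_space sc"
  shows "\<exists>ps. (\<forall>(e,d)\<in>set ps. e \<in> dual_space sc) \<and>
     (\<forall>f\<in>dual_space sc. \<forall>q\<in>set P. f q = (\<Sum>(e,d)\<leftarrow>ps. f d * e q))"
proof (induct P)
  case Nil then show ?case by (intro exI[of _ "[]"]) simp
next
  case (Cons p P)
  then obtain ps where ps1: "\<forall>(e,d)\<in>set ps. e \<in> dual_space sc"
     and ps2: "\<forall>f\<in>dual_space sc. \<forall>q\<in>set P. f q = (\<Sum>(e,d)\<leftarrow>ps. f d * e q)" by blast
  define S where "S f q = (\<Sum>(e,d)\<leftarrow>ps. f d * e q)" for f q
  have S_ds: "(\<lambda>q. S f q) \<in> dual_space sc" for f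
    unfolding S_def using ds_sum[OF vs, of ps "\<lambda>(e,d) q. f d * e q"] ps1 ds_scale[OF vs]
    by (auto simp: split_def)
  show ?case
  proof (cases "\<exists>e\<in>dual_space sc. e p - S e p \<noteq> 0")
    case True
    then obtain e where e: "e \<in> dual_space sc" "e p - S e p \<noteq> 0" by blast
    define w where "w q = (1 / (e p - S e p)) * (e q - S e q)" for q
    have w_ds: "w \<in> dual_space sc"
      unfolding w_def[abs_def] by (intro ds_scale ds_diff vs e S_ds)
    have wp: "w p = 1" using e(2) by (simp add: w_def)
    have wP: "w q = 0" if "q \<in> set P" for q
      using ps2 e(1) that by (simp add: w_def S_def)
    define ps' where "ps' = (w, p) # map (\<lambda>(e',d). (\<lambda>q. e' q - e' p * w q, d)) ps"
    have sum': "(\<Sum>(e,d)\<leftarrow>ps'. f d * e q) = f p * w q + S f q - S f p * w q" for f q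
      unfolding ps'_def S_def using aux_sum[of f q p "w q" ps]
      by (simp add: o_def split_def)
    show ?thesis
    proof (intro exI[of _ ps'] conjI)
      show "\<forall>(e,d)\<in>set ps'. e \<in> dual_space sc"
        using ps1 w_ds unfolding ps'_def
        by (auto intro!: ds_diff[OF vs] ds_scale[OF vs])
      show "\<forall>f\<in>dual_space sc. \<forall>q\<in>set (p # P). f q = (\<Sum>(e,d)\<leftarrow>ps'. f d * e q)"
      proof (intro ballI)
        fix f q assume f: "f \<in> dual_space sc" and q: "q \<in> set (p # P)"
        show "f q = (\<Sum>(e,d)\<leftarrow>ps'. f d * e q)"
        proof (cases "q \<in> set P")
          case True then show ?thesis using sum' wP ps2 f by (simp add: S_def)
        next
          case False then have "q = p" using q by simp
          then show ?thesis using sum' wp by simp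
        qed
      qed
    qed
  next
    case False
    show ?thesis
      using False ps1 ps2 by (intro exI[of _ ps]) (auto simp: S_def)
  qed
qed

theorem proposition6p2:
  fixes sc :: "'k::field \<Rightarrow> 'c::ab_group_add \<Rightarrow> 'c"
    and \<Delta> :: "'c \<Rightarrow> ('c \<times> 'c) list"
    and \<epsilon> :: "'c \<Rightarrow> 'k"
    and scH :: "'k \<Rightarrow> 'h::ab_group_add \<Rightarrow> 'h"
    and act :: "('c \<Rightarrow> 'k) \<Rightarrow> 'h \<Rightarrow> 'h"
  assumes "coalgebra sc \<Delta> \<epsilon>"
    and "simple_dual_module sc \<Delta> \<epsilon> scH act"
    and "embeds_in_dual sc \<Delta> act"
  shows "rational_dual_module sc scH act"
proof -
  from assms(1) have vs: "vector_space sc" and eps: "\<epsilon> \<in> dual_space sc"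
    and cv: "\<And>f g. f \<in> dual_space sc \<Longrightarrow> g \<in> dual_space sc \<Longrightarrow> conv \<Delta> f g \<in> dual_space sc"
    and coass: "\<And>f g h c. f \<in> dual_space sc \<Longrightarrow> g \<in> dual_space sc \<Longrightarrow> h \<in> dual_space sc \<Longrightarrow>
        conv \<Delta> (conv \<Delta> f g) h c = conv \<Delta> f (conv \<Delta> g h) c"
    and cu: "\<And>c. (\<Sum>(a,b)\<leftarrow>\<Delta> c. sc (\<epsilon> a) b) = c"
    unfolding coalgebra_def conv_def by auto
  from assms(2) have dm: "dual_module sc \<Delta> \<epsilon> scH act" and ex0: "\<exists>x::'h. x \<noteq> 0"
    and simp_: "\<And>N. dual_submodule sc act N \<Longrightarrow> N = {0} \<or> N = UNIV"
    unfolding simple_dual_module_def by auto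
  from dm have vsH: "vector_space scH"
    and addf: "\<And>f g x. f \<in> dual_space sc \<Longrightarrow> g \<in> dual_space sc \<Longrightarrow> act (\<lambda>c. f c + g c) x = act f x + act g x"
    and scl: "\<And>f r x. f \<in> dual_space sc \<Longrightarrow> act (\<lambda>c. r * f c) x = scH r (act f x)"
    and actE: "\<And>x. act \<epsilon> x = x"
    unfolding dual_module_def by auto
  from assms(3) obtain \<phi> :: "'h \<Rightarrow> ('c \<Rightarrow> 'k)" where inj: "inj \<phi>" and phids: "\<And>x. \<phi> x \<in> dual_space sc"
    and phiadd: "\<And>x y. \<phi> (x + y) = (\<lambda>c. \<phi> x c + \<phi> y c)"
    and phiact: "\<And>f x. f \<in> dual_space sc \<Longrightarrow> \<phi> (act f x) = conv \<Delta> f (\<phi> x)"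
    unfolding embeds_in_dual_def by blast
  have phi0: "\<phi> 0 = (\<lambda>c. 0)"
  proof
    fix c
    have "\<phi> (0 + 0) c = \<phi> 0 c + \<phi> 0 c" by (simp only: phiadd)
    then have "\<phi> 0 c = \<phi> 0 c + \<phi> 0 c" by (metis add.right_neutral)
    then show "\<phi> 0 c = 0" by (metis add_cancel_right_right)
  qed
  have unitl: "conv \<Delta> \<epsilon> h c = h c" if "h \<in> dual_space sc" for h c
  proof -
    have "conv \<Delta> \<epsilon> h c = (\<Sum>(a,b)\<leftarrow>\<Delta> c. h (sc (\<epsilon> a) b))"
      unfolding conv_def using that vs by (simp add: ds_iff split_def)
    also have "\<dots> = h (\<Sum>(a,b)\<leftarrow>\<Delta> c. sc (\<epsilon> a) b)"
      using ds_sum_list[OF vs that, of "\<lambda>(a,b). sc (\<epsilon> a) b" "\<Delta> c"] by (simp add: split_def)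
    finally show ?thesis using cu by simp
  qed
  obtain x0 :: 'h where x0: "x0 \<noteq> 0" using ex0 by blast
  then have "\<phi> x0 \<noteq> \<phi> 0" using inj by (meson injD)
  then obtain c where c: "\<phi> x0 c \<noteq> 0" using phi0 by auto
  define N where "N = {x. \<forall>g\<in>dual_space sc. conv \<Delta> g (\<phi> x) c = 0}"
  have "dual_submodule sc act N"
    unfolding dual_submodule_def
  proof (intro conjI ballI)
    show "0 \<in> N" unfolding N_def conv_def by (simp add: phi0 sum_list_zero' split_def)
  next
    fix x y assume "x \<in> N" "y \<in> N"
    then show "x + y \<in> N" unfolding N_def conv_def phiadd
      by (simp add: phiadd distrib_left split_def sum_list_addf)
  next
    fix f x assume f: "f \<in> dual_space sc" and x: "x \<in> N"
    show "act f x \<in> N" unfolding N_def mem_Collect_eq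
    proof
      fix g assume g: "g \<in> dual_space sc"
      have "conv \<Delta> g (\<phi> (act f x)) c = conv \<Delta> (conv \<Delta> g f) (\<phi> x) c"
        using coass[OF g f phids] phiact[OF f] by simp
      also have "\<dots> = 0" using x cv[OF g f] unfolding N_def by blast
      finally show "conv \<Delta> g (\<phi> (act f x)) c = 0" .
    qed
  qed
  moreover have "x0 \<notin> N" unfolding N_def using unitl[OF phids, of x0 c] c eps by (simp only: mem_Collect_eq) (metis)
  ultimately have N0: "N = {0}" using simp_ by blast
  define P where "P = concat (map (\<lambda>(a,b). map fst (\<Delta> b)) (\<Delta> c))"
  have van: "act f x = 0" if f: "f \<in> dual_space sc" and fP: "\<forall>p\<in>set P. f p = 0" for f x
  proof -
    have "act f x \<in> N" unfolding N_def mem_Collect_eq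
    proof
      fix g assume g: "g \<in> dual_space sc"
      show "conv \<Delta> g (\<phi> (act f x)) c = 0"
        unfolding phiact[OF f] conv_def
      proof (rule sum_list_zero', intro ballI)
        fix ab assume ab: "ab \<in> set (\<Delta> c)"
        obtain a b where abe: "ab = (a,b)" by force
        have "(\<Sum>(p,q)\<leftarrow>\<Delta> b. f p * \<phi> x q) = 0"
        proof (rule sum_list_zero', intro ballI)
          fix pq assume pq: "pq \<in> set (\<Delta> b)"
          obtain p q where pqe: "pq = (p,q)" by force
          have "p \<in> set P" unfolding P_def using ab abe pq pqe by force
          then show "(\<lambda>(p,q). f p * \<phi> x q) pq = 0" using fP pqe by simp
        qed
        then show "(\<lambda>(a,b). g a * (\<Sum>(p,q)\<leftarrow>\<Delta> b. f p * \<phi> x q)) ab = 0" using abe by simp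
      qed
    qed
    then show ?thesis using N0 by simp
  qed
  obtain ps where ps1: "\<forall>(e,d)\<in>set ps. e \<in> dual_space sc"
     and ps2: "\<forall>f\<in>dual_space sc. \<forall>q\<in>set P. f q = (\<Sum>(e,d)\<leftarrow>ps. f d * e q)"
    using interp[OF vs, of P] by blast
  have actsum: "act (\<lambda>q. \<Sum>(e,d)\<leftarrow>qs. f d * e q) m = (\<Sum>(e,d)\<leftarrow>qs. scH (f d) (act e m))"
    if "\<forall>(e,d)\<in>set qs. e \<in> dual_space sc" for qs f m
    using that
  proof (induct qs)
    case Nil
    have "act (\<lambda>q. 0) m = act (\<lambda>q. 0 * \<epsilon> q) m" by simp
    also have "\<dots> = scH 0 (act \<epsilon> m)" using scl[OF eps] .
    also have "\<dots> = 0" using vsH by (simp add: module.scale_zero_left module_iff_vector_space)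
    finally show ?case by simp
  next
    case (Cons ed qs)
    obtain e d where ed: "ed = (e,d)" by force
    have e: "e \<in> dual_space sc" using Cons ed by simp
    have rest: "(\<lambda>q. \<Sum>(e,d)\<leftarrow>qs. f d * e q) \<in> dual_space sc"
      using ds_sum[OF vs, of qs "\<lambda>(e,d) q. f d * e q"] Cons(2) ds_scale[OF vs]
      by (auto simp: split_def)
    have "act (\<lambda>q. \<Sum>(e,d)\<leftarrow>ed#qs. f d * e q) m = act (\<lambda>q. f d * e q + (\<Sum>(e,d)\<leftarrow>qs. f d * e q)) m"
      using ed by simp
    also have "\<dots> = act (\<lambda>q. f d * e q) m + act (\<lambda>q. \<Sum>(e,d)\<leftarrow>qs. f d * e q) m"
      using addf[OF ds_scale[OF vs e] rest] .
    also have "\<dots> = scH (f d) (act e m) + (\<Sum>(e,d)\<leftarrow>qs. scH (f d) (act e m))"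
      using scl[OF e] Cons by simp
    finally show ?case using ed by simp
  qed
  show ?thesis unfolding rational_dual_module_def
  proof
    fix m
    show "\<exists>ps :: ('h \<times> 'c) list. \<forall>f\<in>dual_space sc. act f m = (\<Sum>(mi,ci)\<leftarrow>ps. scH (f ci) mi)"
    proof (intro exI[of _ "map (\<lambda>(e,d). (act e m, d)) ps"] ballI)
      fix f assume f: "f \<in> dual_space sc"
      define g where "g q = (\<Sum>(e,d)\<leftarrow>ps. f d * e q)" for q
      have gds: "g \<in> dual_space sc"
        unfolding g_def[abs_def] using ds_sum[OF vs, of ps "\<lambda>(e,d) q. f d * e q"] ps1 ds_scale[OF vs]
        by (auto simp: split_def)
      have hds: "(\<lambda>q. f q - g q) \<in> dual_space sc" by (rule ds_diff[OF vs f gds])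
      have "act f m = act (\<lambda>q. (f q - g q) + g q) m" by simp
      also have "\<dots> = act (\<lambda>q. f q - g q) m + act g m" using addf[OF hds gds] .
      also have "act (\<lambda>q. f q - g q) m = 0"
        using van[OF hds] ps2 f by (simp add: g_def)
      also have "act g m = (\<Sum>(e,d)\<leftarrow>ps. scH (f d) (act e m))"
        unfolding g_def[abs_def] using actsum[of ps f m] ps1 by simp
      finally show "act f m = (\<Sum>(mi,ci)\<leftarrow>map (\<lambda>(e,d). (act e m, d)) ps. scH (f ci) mi)"
        by (simp add: o_def split_def)
    qed
  qed
qed

end
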